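(* Let $A_m(x)=R_{2m}(x)$ and $B_m(x)=R_{2m+1}(x)$ for $m\ge0$. Then, as formal power series in $z$, \[ \sum_{m\ge0}A_m(x)z^m=\frac{1-xz^2}{1-(1+x+x^2)z+x^2z^2},\qquad \sum_{m\ge0}B_m(x)z^m=\frac{1+x^3z}{1-(1+x+x^2)z+x^2z^2}+x . \]
   Context: For $n\ge1$ let $\Xi_n$ be the poset on $\{x_1,\dots,x_n\}$ whose cover relations are exactly: $x_2\prec x_1$, $x_3\prec x_2$, and for $3\le i\le n-1$, $x_i\prec x_{i+1}$ if $i$ is odd and $x_{i+1}\prec x_i$ if $i$ is even (so $x_1>x_2>x_3<x_4>x_5<\cdots$). A filter of a poset is an up-closed subset. $\Omega_n$ is the lattice of filters of $\Xi_n$ under reverse inclusion; $\Omega_0$ is the one-element lattice. $R_n(x)=\sum_{F\in\Omega_n}x^{\,n-|F|}$ is the rank generating function of $\Omega_n$, with $R_0(x)=1$. *)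

theory Defs
  imports "HOL-Computational_Algebra.Formal_Power_Series"
begin

text \<open>The poset Xi_n on elements 1..n (element i stands for x_i).
  xi_cover n a b means that x_a is covered by x_b, i.e. x_a \<prec> x_b.\<close>
definition xi_cover :: "nat \<Rightarrow> nat \<Rightarrow> nat \<Rightarrow> bool" where
  "xi_cover n a b \<longleftrightarrow>
     (a = 2 \<and> b = 1 \<and> 2 \<le> n) \<or>
     (a = 3 \<and> b = 2 \<and> 3 \<le> n) \<or>
     (3 \<le> a \<and> a + 1 \<le> n \<and> odd a \<and> b = a + 1) \<or>
     (3 \<le> b \<and> b + 1 \<le> n \<and> even b \<and> a = b + 1)"

definition xi_le :: "nat \<Rightarrow> nat \<Rightarrow> nat \<Rightarrow> bool" where
  "xi_le n = (xi_cover n)\<^sup>*\<^sup>*"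

definition xi_filters :: "nat \<Rightarrow> nat set set" where
  "xi_filters n = {F. F \<subseteq> {1..n} \<and> (\<forall>a\<in>F. \<forall>b\<in>{1..n}. xi_le n a b \<longrightarrow> b \<in> F)}"

definition R :: "nat \<Rightarrow> real \<Rightarrow> real" where
  "R n x = (\<Sum>F\<in>xi_filters n. x ^ (n - card F))"

end

theory Submission
  imports Defs
begin
lemma cover_bounds: "xi_cover n a b \<Longrightarrow> a \<in> {1..n} \<and> b \<in> {1..n}"
  unfolding xi_cover_def by auto

lemma filters_alt:
  "xi_filters n = {F. F \<subseteq> {1..n} \<and> (\<forall>a\<in>F. \<forall>b. xi_cover n a b \<longrightarrow> b \<in> F)}"
proof (intro set_eqI iffI)
  fix F assume "F \<in> xi_filters n"
  then have F: "F \<subseteq> {1..n}" "\<And>a b. a \<in> F \<Longrightarrow> b \<in> {1..n} \<Longrightarrow> xi_le n a b \<Longrightarrow> b \<in> F"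
    unfolding xi_filters_def by auto
  have "b \<in> F" if "a \<in> F" "xi_cover n a b" for a b
  proof (rule F(2)[OF that(1)])
    show "b \<in> {1..n}" using cover_bounds[OF that(2)] by blast
    show "xi_le n a b" unfolding xi_le_def using that(2) by (rule r_into_rtranclp)
  qed
  then show "F \<in> {F. F \<subseteq> {1..n} \<and> (\<forall>a\<in>F. \<forall>b. xi_cover n a b \<longrightarrow> b \<in> F)}"
    using F(1) by blast
next
  fix F assume F: "F \<in> {F. F \<subseteq> {1..n} \<and> (\<forall>a\<in>F. \<forall>b. xi_cover n a b \<longrightarrow> b \<in> F)}"
  have "b \<in> F" if "xi_le n a b" "a \<in> F" for a b
    using that(1,2) unfolding xi_le_def
  proof (induction rule: rtranclp_induct)
    case base then show ?case by simp
  next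
    case (step y z) then show ?case using F by blast
  qed
  then show "F \<in> xi_filters n" using F unfolding xi_filters_def by auto
qed

lemma finite_filters: "finite (xi_filters n)"
proof -
  have "xi_filters n \<subseteq> Pow {1..n}" unfolding xi_filters_def by auto
  then show ?thesis by (rule finite_subset) simp
qed

lemma filter_sub: "F \<in> xi_filters n \<Longrightarrow> F \<subseteq> {1..n}"
  unfolding xi_filters_def by auto

lemma filters_0: "xi_filters 0 = {{}}"
  unfolding filters_alt by (auto simp: xi_cover_def)

lemma filters_1: "xi_filters 1 = {{}, {1}}"
  unfolding filters_alt by (auto simp: xi_cover_def)


lemma C1: "a \<le> n \<Longrightarrow> b \<le> n \<Longrightarrow> xi_cover (Suc n) a b \<longleftrightarrow> xi_cover n a b"
  unfolding xi_cover_def by auto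
lemma C2: "n \<ge> 1 \<Longrightarrow> xi_cover (Suc n) (Suc n) b \<longleftrightarrow> (n = 1 \<or> even n) \<and> b = n"
  unfolding xi_cover_def by auto
lemma C3: "n \<ge> 1 \<Longrightarrow> xi_cover (Suc n) a (Suc n) \<longleftrightarrow> odd n \<and> n \<ge> 3 \<and> a = n"
  unfolding xi_cover_def by auto

lemma S2:
  assumes n: "n \<ge> 1"
  shows "{F\<in>xi_filters (Suc n). Suc n \<notin> F} = {G\<in>xi_filters n. odd n \<and> n \<ge> 3 \<longrightarrow> n \<notin> G}"
proof (intro set_eqI iffI)
  fix F assume "F \<in> {F\<in>xi_filters (Suc n). Suc n \<notin> F}"
  then have F: "F \<subseteq> {1..Suc n}" "Suc n \<notin> F" "\<And>a b. a \<in> F \<Longrightarrow> xi_cover (Suc n) a b \<Longrightarrow> b \<in> F"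
    unfolding filters_alt by auto
  have sub: "F \<subseteq> {1..n}" using F(1,2) by (auto simp: subset_iff le_Suc_eq)
  have "b \<in> F" if "a \<in> F" "xi_cover n a b" for a b
    using F(3)[OF that(1)] C1 cover_bounds[OF that(2)] that(2) by auto
  moreover have "n \<notin> F" if "odd n" "n \<ge> 3"
    using F(2,3) C3[OF n] that by blast
  ultimately show "F \<in> {G\<in>xi_filters n. odd n \<and> n \<ge> 3 \<longrightarrow> n \<notin> G}"
    using sub unfolding filters_alt by blast
next
  fix G assume "G \<in> {G\<in>xi_filters n. odd n \<and> n \<ge> 3 \<longrightarrow> n \<notin> G}"
  then have G: "G \<subseteq> {1..n}" "odd n \<and> n \<ge> 3 \<longrightarrow> n \<notin> G" "\<And>a b. a \<in> G \<Longrightarrow> xi_cover n a b \<Longrightarrow> b \<in> G"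
    unfolding filters_alt by auto
  have "b \<in> G" if "a \<in> G" "xi_cover (Suc n) a b" for a b
  proof -
    have a: "a \<le> n" using G(1) that(1) by auto
    have "b \<le> Suc n" using cover_bounds[OF that(2)] by auto
    then consider "b \<le> n" | "b = Suc n" by linarith
    then show ?thesis
    proof cases
      case 1 then show ?thesis using G(3) that C1 a by blast
    next
      case 2 then show ?thesis using that C3[OF n] G(2) by auto
    qed
  qed
  moreover have "Suc n \<notin> G" using G(1) by auto
  ultimately show "G \<in> {F\<in>xi_filters (Suc n). Suc n \<notin> F}"
    using G(1) unfolding filters_alt by auto
qed

lemma S1:
  assumes n: "n \<ge> 1"
  shows "{F\<in>xi_filters (Suc n). Suc n \<in> F} = insert (Suc n) ` {G\<in>xi_filters n. (n = 1 \<or> even n) \<longrightarrow> n \<in> G}"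
proof (intro set_eqI iffI)
  fix F assume "F \<in> {F\<in>xi_filters (Suc n). Suc n \<in> F}"
  then have F: "F \<subseteq> {1..Suc n}" "Suc n \<in> F" "\<And>a b. a \<in> F \<Longrightarrow> xi_cover (Suc n) a b \<Longrightarrow> b \<in> F"
    unfolding filters_alt by auto
  define G where "G = F - {Suc n}"
  have FG: "F = insert (Suc n) G" using F(2) G_def by auto
  have sub: "G \<subseteq> {1..n}" using F(1) G_def by (auto simp: subset_iff le_Suc_eq)
  have "b \<in> G" if "a \<in> G" "xi_cover n a b" for a b
  proof -
    have "a \<le> n" "b \<le> n" using cover_bounds[OF that(2)] by auto
    then have "xi_cover (Suc n) a b" using C1 that(2) by blast
    then have "b \<in> F" using F(3) that(1) G_def by blast
    then show ?thesis using G_def \<open>b \<le> n\<close> by auto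
  qed
  moreover have "n \<in> G" if "n = 1 \<or> even n"
  proof -
    have "xi_cover (Suc n) (Suc n) n" using C2[OF n] that by blast
    then have "n \<in> F" using F(2,3) by blast
    then show ?thesis using G_def by auto
  qed
  ultimately show "F \<in> insert (Suc n) ` {G\<in>xi_filters n. (n = 1 \<or> even n) \<longrightarrow> n \<in> G}"
    using sub FG unfolding filters_alt by blast
next
  fix F assume "F \<in> insert (Suc n) ` {G\<in>xi_filters n. (n = 1 \<or> even n) \<longrightarrow> n \<in> G}"
  then obtain G where FG: "F = insert (Suc n) G" and "G \<in> {G\<in>xi_filters n. (n = 1 \<or> even n) \<longrightarrow> n \<in> G}"
    by blast
  then have G: "G \<subseteq> {1..n}" "(n = 1 \<or> even n) \<longrightarrow> n \<in> G" "\<And>a b. a \<in> G \<Longrightarrow> xi_cover n a b \<Longrightarrow> b \<in> G"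
    unfolding filters_alt by auto
  have "b \<in> F" if "a \<in> F" "xi_cover (Suc n) a b" for a b
  proof (cases "b = Suc n")
    case True then show ?thesis using FG by simp
  next
    case False
    then have b: "b \<le> n" using cover_bounds[OF that(2)] by auto
    show ?thesis
    proof (cases "a = Suc n")
      case True
      then have "b = n" "n = 1 \<or> even n" using that(2) C2[OF n] by auto
      then show ?thesis using G(2) FG by simp
    next
      case False
      then have "a \<in> G" "a \<le> n" using that(1) FG G(1) by auto
      then have "xi_cover n a b" using C1 b that(2) by blast
      then show ?thesis using G(3) \<open>a \<in> G\<close> FG by blast
    qed
  qed
  moreover have "F \<subseteq> {1..Suc n}" using G(1) FG by auto
  ultimately show "F \<in> {F\<in>xi_filters (Suc n). Suc n \<in> F}"
    unfolding filters_alt using FG by blast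
qed

lemma finite_filter_set: "F \<in> xi_filters n \<Longrightarrow> finite F"
  using filter_sub finite_subset by blast

lemma card_filter_le: "F \<in> xi_filters n \<Longrightarrow> card F \<le> n"
  using filter_sub card_mono[of "{1..n}" F] by fastforce

lemma csum_step:
  assumes n: "n \<ge> 1"
  shows "(\<Sum>F\<in>{F\<in>xi_filters (Suc n). Suc n \<in> F}. (x::real) ^ (Suc n - card F))
       = (\<Sum>G\<in>{G\<in>xi_filters n. (n = 1 \<or> even n) \<longrightarrow> n \<in> G}. x ^ (n - card G))"
proof -
  let ?A = "{G\<in>xi_filters n. (n = 1 \<or> even n) \<longrightarrow> n \<in> G}"
  have inj: "inj_on (insert (Suc n)) ?A"
  proof (rule inj_onI)
    fix G H assume "G \<in> ?A" "H \<in> ?A" "insert (Suc n) G = insert (Suc n) H"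
    moreover have "Suc n \<notin> G" "Suc n \<notin> H" using \<open>G \<in> ?A\<close> \<open>H \<in> ?A\<close> filter_sub by fastforce+
    ultimately show "G = H" by (metis insert_ident)
  qed
  have "(\<Sum>F\<in>{F\<in>xi_filters (Suc n). Suc n \<in> F}. x ^ (Suc n - card F))
      = (\<Sum>G\<in>?A. x ^ (Suc n - card (insert (Suc n) G)))"
    unfolding S1[OF n] by (rule sum.reindex[OF inj, unfolded comp_def])
  also have "\<dots> = (\<Sum>G\<in>?A. x ^ (n - card G))"
  proof (rule sum.cong[OF refl])
    fix G assume G: "G \<in> ?A"
    then have "Suc n \<notin> G" "finite G" using filter_sub finite_filter_set by fastforce+
    then show "x ^ (Suc n - card (insert (Suc n) G)) = x ^ (n - card G)" by simp
  qed
  finally show ?thesis .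
qed

lemma dsum_step:
  assumes n: "n \<ge> 1"
  shows "(\<Sum>F\<in>{F\<in>xi_filters (Suc n). Suc n \<notin> F}. (x::real) ^ (Suc n - card F))
       = x * (\<Sum>G\<in>{G\<in>xi_filters n. odd n \<and> n \<ge> 3 \<longrightarrow> n \<notin> G}. x ^ (n - card G))"
  unfolding S2[OF n] sum_distrib_left
proof (rule sum.cong[OF refl])
  fix G assume "G \<in> {G\<in>xi_filters n. odd n \<and> n \<ge> 3 \<longrightarrow> n \<notin> G}"
  then have "card G \<le> n" using card_filter_le by blast
  then have "Suc n - card G = Suc (n - card G)" by simp
  then show "x ^ (Suc n - card G) = x * x ^ (n - card G)" by simp
qed

definition cc :: "real \<Rightarrow> nat \<Rightarrow> real" where
  "cc x n = (\<Sum>F\<in>{F\<in>xi_filters n. n \<in> F}. x ^ (n - card F))"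
definition dd :: "real \<Rightarrow> nat \<Rightarrow> real" where
  "dd x n = (\<Sum>F\<in>{F\<in>xi_filters n. n \<notin> F}. x ^ (n - card F))"

lemma split_sum:
  assumes "finite A"
  shows "sum f A = sum f {a\<in>A. P a} + sum f {a\<in>A. \<not> P a}"
proof -
  have "A = {a\<in>A. P a} \<union> {a\<in>A. \<not> P a}" by auto
  then have "sum f A = sum f ({a\<in>A. P a} \<union> {a\<in>A. \<not> P a})" by simp
  also have "\<dots> = sum f {a\<in>A. P a} + sum f {a\<in>A. \<not> P a}"
    by (rule sum.union_disjoint) (use assms in auto)
  finally show ?thesis .
qed

lemma R_cd: "R n x = cc x n + dd x n"
  unfolding R_def cc_def dd_def by (rule split_sum[OF finite_filters])

lemma cc_Suc:
  assumes n: "n \<ge> 1"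
  shows "cc x (Suc n) = (if n = 1 \<or> even n then cc x n else cc x n + dd x n)"
proof (cases "n = 1 \<or> even n")
  case True
  then have e: "{G\<in>xi_filters n. (n = 1 \<or> even n) \<longrightarrow> n \<in> G} = {G\<in>xi_filters n. n \<in> G}" by auto
  show ?thesis unfolding cc_def csum_step[OF n] e using True by simp
next
  case False
  then have e: "{G\<in>xi_filters n. (n = 1 \<or> even n) \<longrightarrow> n \<in> G} = xi_filters n" by auto
  show ?thesis unfolding cc_def csum_step[OF n] e using R_cd[of n x] False unfolding R_def cc_def dd_def
    by simp
qed

lemma dd_Suc:
  assumes n: "n \<ge> 1"
  shows "dd x (Suc n) = (if n = 1 \<or> even n then x * (cc x n + dd x n) else x * dd x n)"
proof (cases "n = 1 \<or> even n")
  case True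
  then have "\<not> (odd n \<and> n \<ge> 3)" by auto
  then have e: "{G\<in>xi_filters n. odd n \<and> n \<ge> 3 \<longrightarrow> n \<notin> G} = xi_filters n" by auto
  show ?thesis unfolding dd_def dsum_step[OF n] e using R_cd[of n x] True unfolding R_def cc_def dd_def
    by simp
next
  case False
  then have "odd n \<and> n \<ge> 3" using n by presburger
  then have e: "{G\<in>xi_filters n. odd n \<and> n \<ge> 3 \<longrightarrow> n \<notin> G} = {G\<in>xi_filters n. n \<notin> G}" by auto
  show ?thesis unfolding dd_def dsum_step[OF n] e using False by simp
qed

fun cd :: "real \<Rightarrow> nat \<Rightarrow> real \<times> real" where
  "cd x 0 = (0, 1)"
| "cd x (Suc 0) = (1, x)"
| "cd x (Suc (Suc j)) = (if j = 0 \<or> odd j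
      then (fst (cd x (Suc j)), x * (fst (cd x (Suc j)) + snd (cd x (Suc j))))
      else (fst (cd x (Suc j)) + snd (cd x (Suc j)), x * snd (cd x (Suc j))))"

lemma cd_correct: "cd x n = (cc x n, dd x n)"
proof (induction x n rule: cd.induct)
  case (1 x)
  have a: "{F \<in> {{}}. (0::nat) \<in> F} = {}" by auto
  have b: "{F \<in> {{}}. (0::nat) \<notin> F} = {{}}" by auto
  show ?case unfolding cc_def dd_def filters_0 a b by simp
next
  case (2 x)
  have f1: "xi_filters (Suc 0) = {{}, {Suc 0}}" using filters_1 by simp
  have a: "{F \<in> {{}, {Suc 0}}. Suc 0 \<in> F} = {{Suc 0}}" by auto
  have b: "{F \<in> {{}, {Suc 0}}. Suc 0 \<notin> F} = {{}}" by auto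
  show ?case unfolding cc_def dd_def f1 a b by simp
next
  case (3 x j)
  have e: "(Suc j = 1 \<or> even (Suc j)) = (j = 0 \<or> odd j)" by auto
  show ?case using 3 cc_Suc[of "Suc j" x] dd_Suc[of "Suc j" x] unfolding e by auto
qed

definition g :: "real \<Rightarrow> nat \<Rightarrow> real" where
  "g x n = fst (cd x n) + snd (cd x n)"

lemma R_g: "R n x = g x n"
  unfolding g_def cd_correct R_cd by simp

lemma dvd2_SS: "Suc (Suc 0) dvd Suc (Suc n) \<longleftrightarrow> Suc (Suc 0) dvd n"
  by presburger
lemma dvd2_1: "\<not> Suc (Suc 0) dvd Suc 0" by presburger

lemma cd_one: "n \<ge> 2 \<Longrightarrow> cd x (Suc n) = (if even n then (fst (cd x n), x * (fst (cd x n) + snd (cd x n)))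
      else (fst (cd x n) + snd (cd x n), x * snd (cd x n)))"
proof -
  assume "n \<ge> 2"
  then obtain j where n: "n = Suc (Suc j)" by (metis add_2_eq_Suc le_Suc_ex)
  show ?thesis unfolding n using cd.simps(3)[of x "Suc j"] by (simp del: cd.simps)
qed

lemma cd_two: "n \<ge> 2 \<Longrightarrow> cd x (Suc (Suc n)) = (if odd n then
     (fst (cd x n) + snd (cd x n), x * (fst (cd x n) + snd (cd x n) + x * snd (cd x n)))
   else (fst (cd x n) + x * (fst (cd x n) + snd (cd x n)), x^2 * (fst (cd x n) + snd (cd x n))))"
  using cd.simps(3)[of x n] cd_one[of n x] by (cases "even n") (simp_all del: cd.simps add: power2_eq_square)

lemma g_rec:
  assumes "n \<ge> 2"
  shows "g x (n + 4) = (1 + x + x^2) * g x (n + 2) - x^2 * g x n"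
proof -
  have a: "n + 4 = Suc (Suc (Suc (Suc n)))" "n + 2 = Suc (Suc n)" by simp_all
  have b: "odd (Suc (Suc n)) = odd n" by simp
  show ?thesis unfolding a g_def using cd_two[of n x] cd_two[of "Suc (Suc n)" x] assms
    by (cases "odd n") (simp_all del: cd.simps add: algebra_simps power2_eq_square)
qed

lemma g_small: "g x 0 = 1" "g x 1 = 1 + x" "g x 2 = 1 + x + x^2" "g x 3 = 1 + x + x^2 + x^3"
  "g x 4 = 1 + x + 2*x^2 + 2*x^3 + x^4" "g x 5 = 1 + 2*x + 2*x^2 + 3*x^3 + 2*x^4 + x^5"
  by (simp_all add: g_def numeral_eq_Suc One_nat_def dvd2_SS dvd2_1 algebra_simps power2_eq_square)

lemma g_small2: "g x (Suc 0) = 1 + x" "g x (Suc (Suc 0)) = 1 + x + x^2"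
  "g x (Suc (Suc (Suc 0))) = 1 + x + x^2 + x^3"
  using g_small(2,3,4) by (simp_all add: numeral_2_eq_2 numeral_3_eq_3)

lemma mulP: fixes f :: "real fps" and x :: real shows "fps_nth (f * (1 - fps_const (1 + x + x^2) * fps_X + fps_const (x^2) * fps_X^2)) m
   = fps_nth f m - (1 + x + x^2) * (if m = 0 then 0 else fps_nth f (m - 1)) + x^2 * (if m < 2 then 0 else fps_nth f (m - 2))"
proof -
  have "f * (1 - fps_const (1 + x + x^2) * fps_X + fps_const (x^2) * fps_X^2)
     = f - fps_const (1 + x + x^2) * (fps_X * f) + fps_const (x^2) * (fps_X^2 * f)"
    by (simp add: algebra_simps del: fps_const_add fps_const_power)
  then show ?thesis by (simp add: fps_X_power_mult_nth del: fps_const_add)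
qed

lemma pow5: "(x::real) ^ 5 = x * x * x * x * x" by (simp add: numeral_eq_Suc)

theorem mainTheorem4:
  fixes x :: real
  shows "Abs_fps (\<lambda>m. R (2*m) x)
           = (1 - fps_const x * fps_X^2)
             / (1 - fps_const (1 + x + x^2) * fps_X + fps_const (x^2) * fps_X^2)
       \<and> Abs_fps (\<lambda>m. R (2*m+1) x)
           = (1 + fps_const (x^3) * fps_X)
             / (1 - fps_const (1 + x + x^2) * fps_X + fps_const (x^2) * fps_X^2)
             + fps_const x"
proof -
  define P :: "real fps" where "P = 1 - fps_const (1 + x + x^2) * fps_X + fps_const (x^2) * fps_X^2"
  have "fps_nth P 0 = 1" unfolding P_def by simp
  then have P0: "P \<noteq> 0" by auto
  define A where "A = Abs_fps (\<lambda>m. R (2*m) x)"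
  define B where "B = Abs_fps (\<lambda>m. R (2*m+1) x - (if m = 0 then x else 0))"
  have AP: "A * P = 1 - fps_const x * fps_X^2"
  proof (rule fps_ext)
    fix m
    consider "m = 0" | "m = 1" | "m = 2" | k where "m = Suc (Suc (Suc k))"
      by (metis One_nat_def Suc_1 not0_implies_Suc)
    then show "fps_nth (A * P) m = fps_nth (1 - fps_const x * fps_X^2) m"
    proof cases
      case 1 then show ?thesis unfolding P_def mulP A_def by (simp add: R_g g_small g_small2)
    next
      case 2 then show ?thesis unfolding P_def mulP A_def by (simp add: R_g g_small g_small2)
    next
      case 3 then show ?thesis unfolding P_def mulP A_def by (simp add: R_g g_small g_small2 algebra_simps power2_eq_square power3_eq_cube power4_eq_xxxx pow5)
    next
      case 4
      have e: "2 * m = 2 * k + 2 + 4" "2 * (m - 1) = 2 * k + 2 + 2" "2 * (m - 2) = 2 * k + 2"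
        using 4 by simp_all
      have h: "g x (2 * m) = (1 + x + x^2) * g x (2 * (m - 1)) - x^2 * g x (2 * (m - 2))"
        unfolding e by (rule g_rec) simp
      have "m \<noteq> 0" "\<not> m < 2" "m \<noteq> 2" using 4 by simp_all
      then show ?thesis unfolding P_def mulP A_def using h by (simp add: R_g)
    qed
  qed
  have BP: "B * P = 1 + fps_const (x^3) * fps_X"
  proof (rule fps_ext)
    fix m
    consider "m = 0" | "m = 1" | "m = 2" | k where "m = Suc (Suc (Suc k))"
      by (metis One_nat_def Suc_1 not0_implies_Suc)
    then show "fps_nth (B * P) m = fps_nth (1 + fps_const (x^3) * fps_X) m"
    proof cases
      case 1 then show ?thesis unfolding P_def mulP B_def by (simp add: R_g g_small g_small2)
    next
      case 2 then show ?thesis unfolding P_def mulP B_def by (simp add: R_g g_small g_small2 algebra_simps power2_eq_square power3_eq_cube)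
    next
      case 3 then show ?thesis unfolding P_def mulP B_def by (simp add: R_g g_small g_small2 algebra_simps power2_eq_square power3_eq_cube power4_eq_xxxx pow5)
    next
      case 4
      have e: "2 * m + 1 = 2 * k + 3 + 4" "2 * (m - 1) + 1 = 2 * k + 3 + 2" "2 * (m - 2) + 1 = 2 * k + 3"
        using 4 by simp_all
      have h: "g x (2 * m + 1) = (1 + x + x^2) * g x (2 * (m - 1) + 1) - x^2 * g x (2 * (m - 2) + 1)"
        unfolding e by (rule g_rec) simp
      have "m \<noteq> 0" "\<not> m < 2" "m \<noteq> 2" "m \<noteq> 1" "m - 1 \<noteq> 0" "m - 2 \<noteq> 0" using 4 by simp_all
      then show ?thesis unfolding P_def mulP B_def using h by (simp add: R_g)
    qed
  qed
  have "A = (1 - fps_const x * fps_X^2) / P" unfolding AP[symmetric] using P0 by simp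
  moreover have "Abs_fps (\<lambda>m. R (2*m+1) x) = B + fps_const x"
    unfolding B_def by (rule fps_ext) simp
  moreover have "B = (1 + fps_const (x^3) * fps_X) / P" unfolding BP[symmetric] using P0 by simp
  ultimately show ?thesis unfolding A_def P_def by simp
qed
end
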